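(* Let $\mathcal{G}=(V,L)$ be a finite connected undirected graph with monitor set $M$ and non-monitor set $N=V\setminus M$, $\sigma=|N|$, and let $P$ be a given set of measurement paths between monitors (Uncontrollable Probing). Then for every $v\in N$, the maximum identifiability index of $v$ satisfies $\mathrm{MSC}(v)-1\le\Omega_{\mathrm{UP}}(v)\le\mathrm{MSC}(v)$.
   Context: Failure model: a failure set is any $F\subseteq N$; a path fails iff it traverses a node of $F$. $P_F$ is the set of paths in $P$ traversing a node of $F$; $F_1,F_2$ distinguishable iff $P_{F_1}\ne P_{F_2}$. $S\subseteq N$ is $k$-identifiable if any two failure sets $F_1,F_2$ with $|F_1|,|F_2|\le k$ and $F_1\cap S\ne F_2\cap S$ are distinguishable (every set is trivially $0$-identifiable). $\Omega(v)$ is the maximum $k\in\{0,\dots,\sigma\}$ such that $\{v\}$ is $k$-identifiable. For $v\in N$, $P_v$ is the set of paths in $P$ traversing $v$. $\mathrm{MSC}(v)$ is the minimum cardinality of a set $V'\subseteq N\setminus\{v\}$ with $P_v\subseteq\bigcup_{w\in V'}P_w$; if no such $V'$ exists (e.g. when $v$ lies on a two-hop measurement path monitor–$v$–monitor), $\mathrm{MSC}(v):=\sigma$. *)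

theory Defs
  imports Main
begin

definition undirected_graph :: "'a set \<Rightarrow> ('a \<Rightarrow> 'a \<Rightarrow> bool) \<Rightarrow> bool" where
  "undirected_graph V E \<longleftrightarrow>
     (\<forall>u w. E u w \<longrightarrow> u \<in> V \<and> w \<in> V) \<and>
     (\<forall>u w. E u w \<longrightarrow> E w u) \<and>
     (\<forall>u. \<not> E u u)"

definition connected_graph :: "'a set \<Rightarrow> ('a \<Rightarrow> 'a \<Rightarrow> bool) \<Rightarrow> bool" where
  "connected_graph V E \<longleftrightarrow> (\<forall>u\<in>V. \<forall>w\<in>V. E\<^sup>*\<^sup>* u w)"

definition is_path :: "'a set \<Rightarrow> ('a \<Rightarrow> 'a \<Rightarrow> bool) \<Rightarrow> 'a list \<Rightarrow> bool" where
  "is_path V E p \<longleftrightarrow> p \<noteq> [] \<and> set p \<subseteq> V \<and> distinct p \<and>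
     (\<forall>i. Suc i < length p \<longrightarrow> E (p ! i) (p ! Suc i))"

definition measurement_path :: "'a set \<Rightarrow> ('a \<Rightarrow> 'a \<Rightarrow> bool) \<Rightarrow> 'a set \<Rightarrow> 'a list \<Rightarrow> bool" where
  "measurement_path V E M p \<longleftrightarrow> is_path V E p \<and> hd p \<in> M \<and> last p \<in> M"

definition paths_through :: "'a list set \<Rightarrow> 'a set \<Rightarrow> 'a list set" where
  "paths_through P F = {p \<in> P. \<exists>u\<in>set p. u \<in> F}"

definition k_identifiable :: "'a set \<Rightarrow> 'a list set \<Rightarrow> 'a set \<Rightarrow> nat \<Rightarrow> bool" where
  "k_identifiable N P S k \<longleftrightarrow>
     (\<forall>F1 F2. F1 \<subseteq> N \<longrightarrow> F2 \<subseteq> N \<longrightarrow> card F1 \<le> k \<longrightarrow> card F2 \<le> k \<longrightarrow>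
        F1 \<inter> S \<noteq> F2 \<inter> S \<longrightarrow> paths_through P F1 \<noteq> paths_through P F2)"

definition Omega :: "'a set \<Rightarrow> 'a list set \<Rightarrow> 'a \<Rightarrow> nat" where
  "Omega N P v = Max {k. k \<le> card N \<and> k_identifiable N P {v} k}"

definition MSC :: "'a set \<Rightarrow> 'a list set \<Rightarrow> 'a \<Rightarrow> nat" where
  "MSC N P v =
     (if \<exists>V'. V' \<subseteq> N - {v} \<and> paths_through P {v} \<subseteq> (\<Union>w\<in>V'. paths_through P {w})
      then Min {card V' | V'. V' \<subseteq> N - {v} \<and>
                 paths_through P {v} \<subseteq> (\<Union>w\<in>V'. paths_through P {w})}
      else card N)"

end

theory Submission
  imports Defs
begin

lemma kid_mono: "k_identifiable N P S k \<Longrightarrow> j \<le> k \<Longrightarrow> k_identifiable N P S j"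
  unfolding k_identifiable_def by (meson le_trans)

lemma pt_union: "paths_through P F = (\<Union>w\<in>F. paths_through P {w})"
  unfolding paths_through_def by auto

lemma pt_insert: "paths_through P (insert v F) = paths_through P {v} \<union> paths_through P F"
  unfolding paths_through_def by auto

theorem theorem6:
  fixes V :: "'a set" and E :: "'a \<Rightarrow> 'a \<Rightarrow> bool" and M N :: "'a set"
    and P :: "'a list set" and v :: 'a
  assumes "finite V"
    and "undirected_graph V E"
    and "connected_graph V E"
    and "M \<subseteq> V"
    and "N = V - M"
    and "\<forall>p\<in>P. measurement_path V E M p"
    and "v \<in> N"
  shows "int (MSC N P v) - 1 \<le> int (Omega N P v) \<and> Omega N P v \<le> MSC N P v"
proof -
  have finN: "finite N" using assms(1,5) by simp
  define K where "K = {k. k \<le> card N \<and> k_identifiable N P {v} k}"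
  have finK: "finite K" unfolding K_def by (rule finite_subset[of _ "{..card N}"]) auto
  have "0 \<in> K" unfolding K_def k_identifiable_def
    using finN by (auto dest: finite_subset)
  hence neK: "K \<noteq> {}" by auto
  have Om: "Omega N P v = Max K" unfolding Omega_def K_def by simp
  define C where "C = {V'. V' \<subseteq> N - {v} \<and> paths_through P {v} \<subseteq> (\<Union>w\<in>V'. paths_through P {w})}"
  have MSCd: "MSC N P v = (if C \<noteq> {} then Min (card ` C) else card N)"
    proof -
    have "{card V' | V'. V' \<subseteq> N - {v} \<and>
                 paths_through P {v} \<subseteq> (\<Union>w\<in>V'. paths_through P {w})} = card ` C"
      unfolding C_def by auto
    moreover have "(\<exists>V'. V' \<subseteq> N - {v} \<and> paths_through P {v} \<subseteq> (\<Union>w\<in>V'. paths_through P {w})) = (C \<noteq> {})"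
      unfolding C_def by auto
    ultimately show ?thesis unfolding MSC_def by simp
  qed
  have "C \<subseteq> Pow N" unfolding C_def by auto
  hence finCC: "finite (card ` C)" using finN by (meson finite_Pow_iff finite_imageI finite_subset)
  have mscle: "MSC N P v \<le> card N"
  proof (cases "C = {}")
    case False
    have fin: "finite (card ` C)" using finCC .
    have "Min (card ` C) \<in> card ` C" using Min_in[OF fin] False by auto
    then obtain V' where "V' \<in> C" "card V' = Min (card ` C)" by auto
    moreover have "card V' \<le> card N" using \<open>V' \<in> C\<close> finN unfolding C_def
      by (intro card_mono) auto
    ultimately show ?thesis using False MSCd by simp
  qed (simp add: MSCd)
  have upper: "\<forall>k\<in>K. k \<le> MSC N P v"
  proof
    fix k assume kK: "k \<in> K"
    show "k \<le> MSC N P v"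
    proof (cases "C = {}")
      case True thus ?thesis using kK MSCd unfolding K_def by simp
    next
      case False
      have fin: "finite (card ` C)" using finCC .
      have "Min (card ` C) \<in> card ` C" using Min_in[OF fin] False by auto
      then obtain V' where V'C: "V' \<in> C" and cV0: "card V' = Min (card ` C)"
        by auto
      have cV: "card V' = MSC N P v" using cV0 False MSCd by simp
      have V'N: "V' \<subseteq> N - {v}" and cov: "paths_through P {v} \<subseteq> (\<Union>w\<in>V'. paths_through P {w})"
        using V'C unfolding C_def by auto
      have finV: "finite V'" using V'N finN finite_subset by blast
      show ?thesis
      proof (rule ccontr)
        assume "\<not> k \<le> MSC N P v"
        hence "card V' + 1 \<le> k" using cV by simp
        hence kid: "k_identifiable N P {v} (card V' + 1)"
          using kK kid_mono unfolding K_def by blast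
        have c2: "card (insert v V') = card V' + 1" using finV V'N by (subst card_insert_disjoint) auto
        have "paths_through P (insert v V') = paths_through P V'"
          using cov pt_union[of P V'] pt_insert[of P v V'] by auto
        moreover have "V' \<inter> {v} \<noteq> insert v V' \<inter> {v}" using V'N by auto
        moreover have "V' \<subseteq> N" "insert v V' \<subseteq> N" using V'N assms(7) by auto
        moreover have "card V' \<le> card V' + 1" by simp
        ultimately show False using kid[unfolded k_identifiable_def, rule_format, of V' "insert v V'"] c2 by simp
      qed
    qed
  qed
  have low: "MSC N P v - 1 \<in> K"
    unfolding K_def
  proof (intro CollectI conjI)
    show "MSC N P v - 1 \<le> card N" using mscle by simp
    show "k_identifiable N P {v} (MSC N P v - 1)"
      unfolding k_identifiable_def
    proof (intro allI impI)
      fix F1 F2 assume F1N: "F1 \<subseteq> N" and F2N: "F2 \<subseteq> N"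
        and c1: "card F1 \<le> MSC N P v - 1" and c2: "card F2 \<le> MSC N P v - 1"
        and ne: "F1 \<inter> {v} \<noteq> F2 \<inter> {v}"
      show "paths_through P F1 \<noteq> paths_through P F2"
      proof
        assume eq: "paths_through P F1 = paths_through P F2"
        have key: "False" if AN: "A \<subseteq> N" and BN: "B \<subseteq> N" and cA: "card A \<le> MSC N P v - 1"
          and cB: "card B \<le> MSC N P v - 1" and vB: "v \<in> B" and vA: "v \<notin> A"
          and eqAB: "paths_through P A = paths_through P B" for A B
        proof -
          have "paths_through P {v} \<subseteq> paths_through P B"
            using vB unfolding paths_through_def by auto
          hence AC: "A \<in> C" unfolding C_def using eqAB AN vA pt_union[of P A] by auto
          hence CnE: "C \<noteq> {}" by auto
          have fin: "finite (card ` C)" using finCC .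
          have "MSC N P v \<le> card A" using MSCd CnE Min_le[OF fin] AC by simp
          hence "MSC N P v = 0" using cA by simp
          hence "card B = 0" using cB by simp
          moreover have "finite B" using BN finN finite_subset by blast
          ultimately show False using vB by simp
        qed
        show False
        proof (cases "v \<in> F1")
          case True
          hence "v \<notin> F2" using ne by auto
          thus False using key[OF F2N F1N c2 c1 True] eq by simp
        next
          case False
          hence "v \<in> F2" using ne by auto
          thus False using key[OF F1N F2N c1 c2 _ False] eq by simp
        qed
      qed
    qed
  qed
  have "Max K \<le> MSC N P v" using upper finK neK by simp
  moreover have "MSC N P v - 1 \<le> Max K" using low finK by simp
  ultimately show ?thesis using Om by linarith
qed

end
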